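(* Let $n\geq3$. Then $\Gamma_2(B_n(\mathbb{K}))=\Gamma_i(B_n(\mathbb{K}))$ for all $i\geq3$, and this subgroup equals the normal closure of $\sigma_2^{-1}\sigma_1$ in $B_n(\mathbb{K})$; it is nontrivial, so $B_n(\mathbb{K})$ is not residually nilpotent.
   Context: $\mathbb{K}$ is the Klein bottle. $B_n(\mathbb{K})$ has the presentation with generators $a,b,\sigma_1,\ldots,\sigma_{n-1}$ and relations: $\sigma_i\sigma_{i+1}\sigma_i=\sigma_{i+1}\sigma_i\sigma_{i+1}$; $\sigma_j\sigma_i=\sigma_i\sigma_j$ if $|i-j|\geq2$; $a\sigma_j=\sigma_ja$ and $b\sigma_j=\sigma_jb$ for $j\geq2$; $b^{-1}\sigma_1a=\sigma_1a\sigma_1b^{-1}\sigma_1$; $a(\sigma_1a\sigma_1)=(\sigma_1a\sigma_1)a$; $b(\sigma_1^{-1}b\sigma_1)=(\sigma_1^{-1}b\sigma_1^{-1})b$; $\sigma_1\cdots\sigma_{n-2}\sigma_{n-1}^2\sigma_{n-2}\cdots\sigma_1=ba^{-1}b^{-1}a^{-1}$. $\Gamma_1=G$, $\Gamma_{i+1}=[\Gamma_i,G]$. *)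

theory Defs
  imports "HOL-Algebra.Algebra"
begin

text \<open>A letter is a pair (generator, flag); flag True means the inverse of the generator.\<close>
type_synonym 'g word = "('g \<times> bool) list"

definition winv :: "'g word \<Rightarrow> 'g word" where
  "winv w = rev (map (\<lambda>(g, b). (g, \<not> b)) w)"

inductive pres_eq :: "'g word set \<Rightarrow> 'g word \<Rightarrow> 'g word \<Rightarrow> bool" for R where
  refl: "pres_eq R w w"
| sym: "pres_eq R u v \<Longrightarrow> pres_eq R v u"
| trans: "pres_eq R u v \<Longrightarrow> pres_eq R v w \<Longrightarrow> pres_eq R u w"
| cancel: "pres_eq R (u @ [(g, b), (g, \<not> b)] @ v) (u @ v)"
| relator: "r \<in> R \<Longrightarrow> pres_eq R (u @ r @ v) (u @ v)"

definition pclass :: "'g word set \<Rightarrow> 'g word \<Rightarrow> 'g word set" where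
  "pclass R w = {v. pres_eq R w v}"

definition presented_group :: "'g set \<Rightarrow> 'g word set \<Rightarrow> ('g word set) monoid" where
  "presented_group S R =
     \<lparr> carrier = {pclass R w | w. set w \<subseteq> S \<times> UNIV},
       monoid.mult = (\<lambda>P Q. pclass R ((SOME p. p \<in> P) @ (SOME q. q \<in> Q))),
       monoid.one = pclass R [] \<rparr>"

datatype kgen = GA | GB | GS nat

abbreviation (input) la :: "kgen word" where "la \<equiv> [(GA, False)]"
abbreviation (input) lai :: "kgen word" where "lai \<equiv> [(GA, True)]"
abbreviation (input) lb :: "kgen word" where "lb \<equiv> [(GB, False)]"
abbreviation (input) lbi :: "kgen word" where "lbi \<equiv> [(GB, True)]"
abbreviation (input) ls :: "nat \<Rightarrow> kgen word" where "ls i \<equiv> [(GS i, False)]"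
abbreviation (input) lsi :: "nat \<Rightarrow> kgen word" where "lsi i \<equiv> [(GS i, True)]"

text \<open>The relation u = v as the relator u v^{-1}.\<close>
definition eqrel :: "'g word \<Rightarrow> 'g word \<Rightarrow> 'g word" where
  "eqrel u v = u @ winv v"

definition kgens :: "nat \<Rightarrow> kgen set" where
  "kgens n = {GA, GB} \<union> {GS i | i. 1 \<le> i \<and> i \<le> n - 1}"

definition krels :: "nat \<Rightarrow> kgen word set" where
  "krels n =
     {eqrel (ls i @ ls (i+1) @ ls i) (ls (i+1) @ ls i @ ls (i+1)) | i. 1 \<le> i \<and> i \<le> n - 2}
   \<union> {eqrel (ls j @ ls i) (ls i @ ls j) | i j. 1 \<le> i \<and> i \<le> n - 1 \<and> 1 \<le> j \<and> j \<le> n - 1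
         \<and> (i + 2 \<le> j \<or> j + 2 \<le> i)}
   \<union> {eqrel (la @ ls j) (ls j @ la) | j. 2 \<le> j \<and> j \<le> n - 1}
   \<union> {eqrel (lb @ ls j) (ls j @ lb) | j. 2 \<le> j \<and> j \<le> n - 1}
   \<union> {eqrel (lbi @ ls 1 @ la) (ls 1 @ la @ ls 1 @ lbi @ ls 1),
      eqrel (la @ ls 1 @ la @ ls 1) (ls 1 @ la @ ls 1 @ la),
      eqrel (lb @ lsi 1 @ lb @ ls 1) (lsi 1 @ lb @ lsi 1 @ lb),
      eqrel (concat (map ls [1..<n]) @ rev (concat (map ls [1..<n])))
            (lb @ lai @ lbi @ lai)}"

definition braid_K :: "nat \<Rightarrow> (kgen word set) monoid" where
  "braid_K n = presented_group (kgens n) (krels n)"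

definition sigma_K :: "nat \<Rightarrow> nat \<Rightarrow> kgen word set" where
  "sigma_K n i = pclass (krels n) (ls i)"

definition comm_subgroup :: "('a, 'b) monoid_scheme \<Rightarrow> 'a set \<Rightarrow> 'a set \<Rightarrow> 'a set" where
  "comm_subgroup G H K =
     generate G {h \<otimes>\<^bsub>G\<^esub> k \<otimes>\<^bsub>G\<^esub> inv\<^bsub>G\<^esub> h \<otimes>\<^bsub>G\<^esub> inv\<^bsub>G\<^esub> k | h k. h \<in> H \<and> k \<in> K}"

primrec lcs :: "('a, 'b) monoid_scheme \<Rightarrow> nat \<Rightarrow> 'a set" where
  "lcs G 0 = carrier G"
| "lcs G (Suc i) = comm_subgroup G (lcs G i) (carrier G)"

text \<open>Gamma_i with the paper's indexing: Gamma_1 = G, Gamma_{i+1} = [Gamma_i, G].\<close>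
definition Gamma :: "('a, 'b) monoid_scheme \<Rightarrow> nat \<Rightarrow> 'a set" where
  "Gamma G i = lcs G (i - 1)"

definition normal_closure :: "('a, 'b) monoid_scheme \<Rightarrow> 'a set \<Rightarrow> 'a set" where
  "normal_closure G Y = generate G {u \<otimes>\<^bsub>G\<^esub> y \<otimes>\<^bsub>G\<^esub> inv\<^bsub>G\<^esub> u | u y. u \<in> carrier G \<and> y \<in> Y}"

definition residually_nilpotent :: "('a, 'b) monoid_scheme \<Rightarrow> bool" where
  "residually_nilpotent G \<longleftrightarrow> (\<Inter>i\<in>{1..}. Gamma G i) = {one G}"

end

theory Submission
  imports Defs
begin



lemma pres_eq_equiv_cong:
  "pres_eq R u v \<Longrightarrow> pres_eq R (x @ u @ y) (x @ v @ y)"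
proof (induction rule: pres_eq.induct)
  case (refl w) then show ?case by (rule pres_eq.refl)
next
  case (sym u v) then show ?case by (simp add: pres_eq.sym)
next
  case (trans u v w) then show ?case by (metis pres_eq.trans)
next
  case (cancel u g b v)
  then show ?case using pres_eq.cancel[of R "x @ u" g b "v @ y"] by simp
next
  case (relator r u v)
  then show ?case using pres_eq.relator[of r R "x @ u" "v @ y"] by simp
qed

lemma pres_eq_app:
  "pres_eq R u u' \<Longrightarrow> pres_eq R v v' \<Longrightarrow> pres_eq R (u @ v) (u' @ v')"
  using pres_eq_equiv_cong[of R u u' "[]" v] pres_eq_equiv_cong[of R v v' u' "[]"]
  by (metis append.right_neutral append_Nil pres_eq.trans)

lemma pclass_eq_iff: "pclass R u = pclass R v \<longleftrightarrow> pres_eq R u v"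
proof
  assume "pclass R u = pclass R v"
  then have "v \<in> pclass R u" by (simp add: pclass_def pres_eq.refl)
  then show "pres_eq R u v" by (simp add: pclass_def)
next
  assume h: "pres_eq R u v"
  show "pclass R u = pclass R v"
    unfolding pclass_def using h by (auto intro: pres_eq.trans pres_eq.sym)
qed

lemma some_pclass: "pres_eq R w (SOME p. p \<in> pclass R w)"
proof -
  have "w \<in> pclass R w" by (simp add: pclass_def pres_eq.refl)
  then have "(SOME p. p \<in> pclass R w) \<in> pclass R w" by (rule someI)
  then show ?thesis by (simp add: pclass_def)
qed

lemma pg_mult: "pclass R u \<otimes>\<^bsub>presented_group S R\<^esub> pclass R v = pclass R (u @ v)"
  unfolding presented_group_def
  by (simp add: pclass_eq_iff) (metis pres_eq_app some_pclass pres_eq.sym)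

lemma pg_one: "\<one>\<^bsub>presented_group S R\<^esub> = pclass R []"
  by (simp add: presented_group_def)

lemma pg_carrier: "carrier (presented_group S R) = {pclass R w | w. set w \<subseteq> S \<times> UNIV}"
  by (simp add: presented_group_def)

lemma winv_cancel: "pres_eq R (winv w @ w) []"
proof (induction w)
  case Nil then show ?case by (simp add: winv_def pres_eq.refl)
next
  case (Cons x w)
  obtain g b where x: "x = (g, b)" by fastforce
  have "winv (x # w) @ x # w = winv w @ [(g, \<not> b), (g, \<not>\<not> b)] @ w"
    by (simp add: winv_def x)
  moreover have "pres_eq R (winv w @ [(g, \<not> b), (g, \<not>\<not> b)] @ w) (winv w @ w)"
    by (rule pres_eq.cancel)
  ultimately show ?case using Cons by (metis pres_eq.trans)
qed

lemma winv_set: "set w \<subseteq> S \<times> UNIV \<Longrightarrow> set (winv w) \<subseteq> S \<times> UNIV"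
  by (auto simp: winv_def)

lemma pg_group: "group (presented_group S R)"
proof (rule groupI)
  fix x y assume "x \<in> carrier (presented_group S R)" "y \<in> carrier (presented_group S R)"
  then show "x \<otimes>\<^bsub>presented_group S R\<^esub> y \<in> carrier (presented_group S R)"
    by (auto simp: pg_carrier pg_mult) (metis Un_subset_iff set_append)
next
  show "\<one>\<^bsub>presented_group S R\<^esub> \<in> carrier (presented_group S R)"
    by (auto simp: pg_carrier pg_one)
next
  fix x y z assume "x \<in> carrier (presented_group S R)" "y \<in> carrier (presented_group S R)"
    "z \<in> carrier (presented_group S R)"
  then show "x \<otimes>\<^bsub>presented_group S R\<^esub> y \<otimes>\<^bsub>presented_group S R\<^esub> z =
        x \<otimes>\<^bsub>presented_group S R\<^esub> (y \<otimes>\<^bsub>presented_group S R\<^esub> z)"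
    by (auto simp: pg_carrier pg_mult)
next
  fix x assume "x \<in> carrier (presented_group S R)"
  then show "\<one>\<^bsub>presented_group S R\<^esub> \<otimes>\<^bsub>presented_group S R\<^esub> x = x"
    by (auto simp: pg_carrier pg_mult pg_one)
next
  fix x assume "x \<in> carrier (presented_group S R)"
  then obtain w where w: "x = pclass R w" "set w \<subseteq> S \<times> UNIV" by (auto simp: pg_carrier)
  show "\<exists>y\<in>carrier (presented_group S R). y \<otimes>\<^bsub>presented_group S R\<^esub> x = \<one>\<^bsub>presented_group S R\<^esub>"
  proof (intro bexI)
    show "pclass R (winv w) \<otimes>\<^bsub>presented_group S R\<^esub> x = \<one>\<^bsub>presented_group S R\<^esub>"
      by (simp add: w pg_mult pg_one pclass_eq_iff winv_cancel)
    show "pclass R (winv w) \<in> carrier (presented_group S R)"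
      using winv_set[OF w(2)] by (auto simp: pg_carrier)
  qed
qed

lemma pg_split: "pclass R (u @ v) = pclass R u \<otimes>\<^bsub>presented_group S R\<^esub> pclass R v"
  by (simp add: pg_mult)

lemma pg_cons2: "pclass R (x # y # w) = pclass R [x] \<otimes>\<^bsub>presented_group S R\<^esub> pclass R (y # w)"
  using pg_split[of R "[x]" "y # w" S] by simp

lemma pg_letter_in: "g \<in> S \<Longrightarrow> pclass R [(g, b)] \<in> carrier (presented_group S R)"
  by (auto simp: pg_carrier intro!: exI[of _ "[(g,b)]"])

lemma pg_inv_letter:
  assumes g: "g \<in> S"
  shows "pclass R [(g, True)] = inv\<^bsub>presented_group S R\<^esub> pclass R [(g, False)]"
proof -
  interpret group "presented_group S R" by (rule pg_group)
  have "pclass R [(g, True)] \<otimes>\<^bsub>presented_group S R\<^esub> pclass R [(g, False)] = \<one>\<^bsub>presented_group S R\<^esub>"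
    using pres_eq.cancel[of R "[]" g True "[]"]
    by (simp add: pg_mult pg_one pclass_eq_iff)
  then show ?thesis
    using inv_equality pg_letter_in[OF g] by metis
qed

lemma pg_relator: "r \<in> R \<Longrightarrow> pclass R r = \<one>\<^bsub>presented_group S R\<^esub>"
  using pres_eq.relator[of r R "[]" "[]"] by (simp add: pg_one pclass_eq_iff)

lemma pg_eqrel:
  assumes "eqrel u v \<in> R" shows "pclass R u = pclass R v"
proof -
  have 1: "pres_eq R ((u @ winv v) @ v) ([] @ v)"
    using pres_eq_app[OF pres_eq.relator[of "eqrel u v" R "[]" "[]", simplified, OF assms] pres_eq.refl[of R v]]
    by (simp add: eqrel_def)
  have 2: "pres_eq R (u @ (winv v @ v)) (u @ [])"
    using pres_eq_app[OF pres_eq.refl[of R u] winv_cancel[of R v]] .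
  from 1 2 have "pres_eq R u v" by (simp add: eqrel_def) (metis pres_eq.sym pres_eq.trans)
  then show ?thesis by (simp add: pclass_eq_iff)
qed

lemma pg_generate:
  "carrier (presented_group S R) = generate (presented_group S R) ((\<lambda>g. pclass R [(g, False)]) ` S)"
proof -
  interpret group "presented_group S R" by (rule pg_group)
  let ?T = "(\<lambda>g. pclass R [(g, False)]) ` S"
  have T: "?T \<subseteq> carrier (presented_group S R)" by (auto intro: pg_letter_in)
  have "pclass R w \<in> generate (presented_group S R) ?T" if "set w \<subseteq> S \<times> UNIV" for w
    using that
  proof (induction w)
    case Nil then show ?case using generate.one pg_one by metis
  next
    case (Cons x w)
    obtain g b where x: "x = (g, b)" by fastforce
    have g: "g \<in> S" using Cons.prems x by auto
    have "pclass R [x] \<in> generate (presented_group S R) ?T"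
    proof (cases b)
      case True
      then show ?thesis using x g pg_inv_letter[OF g, of R] generate.inv[of "pclass R [(g, False)]" ?T] by auto
    next
      case False
      then show ?thesis using x g generate.incl[of "pclass R [(g, False)]" ?T] by auto
    qed
    moreover have "pclass R w \<in> generate (presented_group S R) ?T" using Cons by auto
    ultimately show ?case using pg_split[of R "[x]" w S] generate.eng by fastforce
  qed
  then have "carrier (presented_group S R) \<subseteq> generate (presented_group S R) ?T"
    by (auto simp: pg_carrier)
  moreover have "generate (presented_group S R) ?T \<subseteq> carrier (presented_group S R)"
    using generate_incl[OF T] .
  ultimately show ?thesis by blast
qed




context group begin

lemma cancel1[simp]: "x \<in> carrier G \<Longrightarrow> y \<in> carrier G \<Longrightarrow> x \<otimes> (inv x \<otimes> y) = y"
  by (simp add: m_assoc[symmetric])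
lemma cancel2[simp]: "x \<in> carrier G \<Longrightarrow> y \<in> carrier G \<Longrightarrow> inv x \<otimes> (x \<otimes> y) = y"
  by (simp add: m_assoc[symmetric])

lemma lcs_carrier: "lcs G i \<subseteq> carrier G"
proof (induction i)
  case 0 then show ?case by simp
next
  case (Suc i)
  have "{h \<otimes> k \<otimes> inv h \<otimes> inv k | h k. h \<in> lcs G i \<and> k \<in> carrier G} \<subseteq> carrier G"
    using Suc by auto
  then show ?case by (simp add: comm_subgroup_def generate_incl)
qed

lemma lcs_subgroup: "subgroup (lcs G i) G"
proof (cases i)
  case 0 then show ?thesis by (simp add: subgroup_self)
next
  case (Suc j)
  have "{h \<otimes> k \<otimes> inv h \<otimes> inv k | h k. h \<in> lcs G j \<and> k \<in> carrier G} \<subseteq> carrier G"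
    using lcs_carrier by blast
  then show ?thesis by (simp add: Suc comm_subgroup_def generate_is_subgroup)
qed

lemma comm_in_lcs: "h \<in> lcs G i \<Longrightarrow> k \<in> carrier G \<Longrightarrow> h \<otimes> k \<otimes> inv h \<otimes> inv k \<in> lcs G (Suc i)"
  by (auto simp: comm_subgroup_def intro!: generate.incl)

lemma braid_c_lcs:
  assumes s1: "s1 \<in> carrier G" and s2: "s2 \<in> carrier G"
    and br: "s1 \<otimes> s2 \<otimes> s1 = s2 \<otimes> s1 \<otimes> s2"
  shows "inv s2 \<otimes> s1 \<in> lcs G 1" "inv s2 \<otimes> s1 \<in> lcs G 2"
proof -
  have br': "s2 \<otimes> (s1 \<otimes> (s2 \<otimes> x)) = s1 \<otimes> (s2 \<otimes> (s1 \<otimes> x))" if "x \<in> carrier G" for x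
    using br that s1 s2 by (metis m_assoc m_closed)
  define c where "c = inv s2 \<otimes> s1"
  have cC: "c \<in> carrier G" using s1 s2 by (simp add: c_def numeral_2_eq_2)
  have e1: "c = (s1 \<otimes> s2) \<otimes> inv s1 \<otimes> inv (s1 \<otimes> s2) \<otimes> inv (inv s1)"
  proof -
    have "s2 \<otimes> c = s2 \<otimes> ((s1 \<otimes> s2) \<otimes> inv s1 \<otimes> inv (s1 \<otimes> s2) \<otimes> inv (inv s1))"
      using s1 s2 by (simp add: c_def m_assoc inv_mult_group br')
    then show ?thesis using s1 s2 cC by (metis l_cancel m_closed inv_closed)
  qed
  show c1: "inv s2 \<otimes> s1 \<in> lcs G 1"
    unfolding c_def[symmetric] e1 using s1 s2 comm_in_lcs[of "s1 \<otimes> s2" 0 "inv s1"]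
    by simp
  have e2: "c = inv (c \<otimes> s2 \<otimes> inv c \<otimes> inv s2) \<otimes> (c \<otimes> (s2 \<otimes> s2) \<otimes> inv c \<otimes> inv (s2 \<otimes> s2))"
  proof -
    have "s2 \<otimes> c = s2 \<otimes> (inv (c \<otimes> s2 \<otimes> inv c \<otimes> inv s2) \<otimes> (c \<otimes> (s2 \<otimes> s2) \<otimes> inv c \<otimes> inv (s2 \<otimes> s2)))"
      using s1 s2 by (simp add: c_def m_assoc inv_mult_group br')
    then show ?thesis using s1 s2 cC by (metis l_cancel m_closed inv_closed)
  qed
  have c1': "c \<in> lcs G 1" using c1 by (simp only: c_def)
  have "c \<otimes> s2 \<otimes> inv c \<otimes> inv s2 \<in> lcs G (Suc 1)"
    by (rule comm_in_lcs[OF c1' s2])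
  then have "c \<otimes> s2 \<otimes> inv c \<otimes> inv s2 \<in> lcs G 2" by (simp only: Suc_1)
  then have f1: "inv (c \<otimes> s2 \<otimes> inv c \<otimes> inv s2) \<in> lcs G 2"
    by (rule subgroup.m_inv_closed[OF lcs_subgroup])
  have "c \<otimes> (s2 \<otimes> s2) \<otimes> inv c \<otimes> inv (s2 \<otimes> s2) \<in> lcs G (Suc 1)"
    using s2 by (intro comm_in_lcs[OF c1']) simp
  then have f2: "c \<otimes> (s2 \<otimes> s2) \<otimes> inv c \<otimes> inv (s2 \<otimes> s2) \<in> lcs G 2" by (simp only: Suc_1)
  have "c \<in> lcs G 2"
    by (subst e2) (rule subgroup.m_closed[OF lcs_subgroup f1 f2])
  then show "inv s2 \<otimes> s1 \<in> lcs G 2" by (simp only: c_def)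
qed

end



context group begin

lemma cancel_r: "x \<in> carrier G \<Longrightarrow> y \<in> carrier G \<Longrightarrow> w \<in> carrier G \<Longrightarrow> x \<otimes> w = y \<otimes> w \<Longrightarrow> x = y"
  by simp

lemma all_sigma_eq:
  fixes s :: "nat \<Rightarrow> 'a" and n i :: nat
  assumes n3: "n \<ge> 3"
    and sC: "\<And>i. 1 \<le> i \<Longrightarrow> i \<le> n - 1 \<Longrightarrow> s i \<in> carrier G"
    and braid: "\<And>i. 1 \<le> i \<Longrightarrow> i \<le> n - 2 \<Longrightarrow> s i \<otimes> (s (i+1) \<otimes> s i) = s (i+1) \<otimes> (s i \<otimes> s (i+1))"
    and far: "\<And>i. 1 \<le> i \<Longrightarrow> i + 2 \<le> n - 1 \<Longrightarrow> s (i+2) \<otimes> s i = s i \<otimes> s (i+2)"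
    and e12: "s 1 = s 2"
  shows "1 \<le> i \<Longrightarrow> i \<le> n - 1 \<Longrightarrow> s i = s 1"
proof (induction i rule: less_induct)
  case (less i)
  show ?case
  proof (cases "i \<le> 2")
    case True
    then have "i = 1 \<or> i = 2" using less.prems by auto
    then show ?thesis using e12 by auto
  next
    case False
    define j where "j = i - 2"
    have ij: "i = j + 2" "j \<ge> 1" using False j_def by auto
    have sj: "s j = s 1" using less.IH[of j] ij less.prems by auto
    have sj1: "s (j+1) = s 1" using less.IH[of "j+1"] ij less.prems by auto
    have x: "s (j+1) \<in> carrier G" "s (j+2) \<in> carrier G" using sC ij less.prems by auto
    have cm: "s (j+2) \<otimes> s (j+1) = s (j+1) \<otimes> s (j+2)"
      using far[of j] ij less.prems sj sj1 by auto
    have br: "s (j+1) \<otimes> (s (j+2) \<otimes> s (j+1)) = s (j+2) \<otimes> (s (j+1) \<otimes> s (j+2))"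
      using braid[of "j+1"] ij less.prems by (simp add: add.assoc)
    have eqq: "s (j+1) \<otimes> (s (j+1) \<otimes> s (j+2)) = s (j+2) \<otimes> (s (j+1) \<otimes> s (j+2))"
      using br cm by simp
    have "s (j+1) = s (j+2)" by (rule cancel_r[OF _ _ _ eqq]) (use x in auto)
    then show ?thesis using ij sj1 by simp
  qed
qed

lemma comm_inv:
  assumes x: "x \<in> carrier G" and y: "y \<in> carrier G" and h: "x \<otimes> y = y \<otimes> x"
  shows "inv x \<otimes> y = y \<otimes> inv x"
proof -
  have "inv x \<otimes> y = inv x \<otimes> (y \<otimes> x) \<otimes> inv x" using x y by (simp add: m_assoc)
  also have "\<dots> = inv x \<otimes> (x \<otimes> y) \<otimes> inv x" using h by simp
  also have "\<dots> = y \<otimes> inv x" using x y by simp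
  finally show ?thesis .
qed

lemma ab_comm:
  assumes sC: "s \<in> carrier G" and aC: "a \<in> carrier G" and bC: "b \<in> carrier G"
    and as: "a \<otimes> s = s \<otimes> a" and bs: "b \<otimes> s = s \<otimes> b"
    and R5: "inv b \<otimes> (s \<otimes> a) = s \<otimes> (a \<otimes> (s \<otimes> (inv b \<otimes> s)))"
    and R7: "b \<otimes> (inv s \<otimes> (b \<otimes> s)) = inv s \<otimes> (b \<otimes> (inv s \<otimes> b))"
  shows "a \<otimes> b = b \<otimes> a"
proof -
  have bis: "inv b \<otimes> s = s \<otimes> inv b" using comm_inv[OF bC sC bs] .
  have bsi: "inv s \<otimes> b = b \<otimes> inv s" using comm_inv[OF sC bC bs[symmetric]] .
  have eq: "b \<otimes> b = inv s \<otimes> (inv s \<otimes> (b \<otimes> b))"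
  proof -
    have "b \<otimes> b = b \<otimes> (inv s \<otimes> (s \<otimes> b))" using sC bC by simp
    also have "\<dots> = b \<otimes> (inv s \<otimes> (b \<otimes> s))" using bs by simp
    also have "\<dots> = inv s \<otimes> (b \<otimes> (inv s \<otimes> b))" by (rule R7)
    also have "\<dots> = inv s \<otimes> ((b \<otimes> inv s) \<otimes> b)" using sC bC by (simp add: m_assoc)
    also have "\<dots> = inv s \<otimes> ((inv s \<otimes> b) \<otimes> b)" using bsi by simp
    also have "\<dots> = inv s \<otimes> (inv s \<otimes> (b \<otimes> b))" using sC bC by (simp add: m_assoc)
    finally show ?thesis .
  qed
  have "(s \<otimes> s) \<otimes> (b \<otimes> b) = s \<otimes> (s \<otimes> (b \<otimes> b))" using sC bC by (simp add: m_assoc)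
  also have "\<dots> = s \<otimes> (s \<otimes> (inv s \<otimes> (inv s \<otimes> (b \<otimes> b))))"
    by (rule arg_cong[where f="\<lambda>z. s \<otimes> (s \<otimes> z)", OF eq])
  also have "\<dots> = \<one> \<otimes> (b \<otimes> b)" using sC bC by simp
  finally have sb: "s \<otimes> s \<otimes> (b \<otimes> b) = \<one> \<otimes> (b \<otimes> b)" .
  have ss: "s \<otimes> s = \<one>" by (rule cancel_r[OF _ _ _ sb]) (use sC bC in auto)
  have "s \<otimes> (inv b \<otimes> a) = s \<otimes> (a \<otimes> inv b)"
  proof -
    have "s \<otimes> (inv b \<otimes> a) = inv b \<otimes> (s \<otimes> a)" using bis sC aC bC by (simp add: m_assoc[symmetric])
    also have "\<dots> = s \<otimes> (a \<otimes> (s \<otimes> (inv b \<otimes> s)))" by (rule R5)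
    also have "\<dots> = s \<otimes> (a \<otimes> ((s \<otimes> s) \<otimes> inv b))" using bis sC aC bC by (simp add: m_assoc)
    also have "\<dots> = s \<otimes> (a \<otimes> inv b)" using ss bC by simp
    finally show ?thesis .
  qed
  then have "inv b \<otimes> a = a \<otimes> inv b" using sC aC bC by simp
  from comm_inv[OF _ aC this] bC show ?thesis by simp
qed

end



lemma (in group_hom) comm_gen:
  assumes T: "T \<subseteq> carrier G" and z: "z \<in> carrier H"
    and tc: "\<And>t. t \<in> T \<Longrightarrow> h t \<otimes>\<^bsub>H\<^esub> z = z \<otimes>\<^bsub>H\<^esub> h t"
    and x: "x \<in> generate G T"
  shows "h x \<otimes>\<^bsub>H\<^esub> z = z \<otimes>\<^bsub>H\<^esub> h x"
  using x
proof (induction rule: generate.induct)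
  case one then show ?case using z by simp
next
  case (incl t) then show ?case using tc by simp
next
  case (inv t)
  then have tC: "t \<in> carrier G" using T by auto
  have "inv\<^bsub>H\<^esub> (h t) \<otimes>\<^bsub>H\<^esub> z = z \<otimes>\<^bsub>H\<^esub> inv\<^bsub>H\<^esub> (h t)"
    by (rule H.comm_inv[OF _ z]) (use tc[OF inv] tC z in auto)
  then show ?case using tC by simp
next
  case (eng h1 h2)
  have c1: "h1 \<in> carrier G" "h2 \<in> carrier G" using eng.hyps T G.generate_incl by blast+
  have "h (h1 \<otimes>\<^bsub>G\<^esub> h2) \<otimes>\<^bsub>H\<^esub> z = h h1 \<otimes>\<^bsub>H\<^esub> (h h2 \<otimes>\<^bsub>H\<^esub> z)"
    using c1 z by (simp add: H.m_assoc)
  also have "\<dots> = h h1 \<otimes>\<^bsub>H\<^esub> (z \<otimes>\<^bsub>H\<^esub> h h2)" using eng.IH by simp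
  also have "\<dots> = (h h1 \<otimes>\<^bsub>H\<^esub> z) \<otimes>\<^bsub>H\<^esub> h h2" using c1 z by (simp add: H.m_assoc)
  also have "\<dots> = (z \<otimes>\<^bsub>H\<^esub> h h1) \<otimes>\<^bsub>H\<^esub> h h2" using eng.IH by simp
  also have "\<dots> = z \<otimes>\<^bsub>H\<^esub> h (h1 \<otimes>\<^bsub>G\<^esub> h2)" using c1 z by (simp add: H.m_assoc)
  finally show ?case .
qed

lemma (in group_hom) comm_all:
  assumes T: "T \<subseteq> carrier G" and gen: "carrier G = generate G T"
    and tc: "\<And>t u. t \<in> T \<Longrightarrow> u \<in> T \<Longrightarrow> h t \<otimes>\<^bsub>H\<^esub> h u = h u \<otimes>\<^bsub>H\<^esub> h t"
    and x: "x \<in> carrier G" and y: "y \<in> carrier G"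
  shows "h x \<otimes>\<^bsub>H\<^esub> h y = h y \<otimes>\<^bsub>H\<^esub> h x"
proof -
  have 1: "h x \<otimes>\<^bsub>H\<^esub> h t = h t \<otimes>\<^bsub>H\<^esub> h x" if t: "t \<in> T" for t
    by (rule comm_gen[OF T _ _ x[unfolded gen]]) (use t T tc in auto)
  have "h y \<otimes>\<^bsub>H\<^esub> h x = h x \<otimes>\<^bsub>H\<^esub> h y"
    by (rule comm_gen[OF T _ _ y[unfolded gen]]) (use x 1 in auto)
  then show ?thesis by simp
qed

lemma (in group) comm_mod:
  assumes N: "N \<lhd> G" and T: "T \<subseteq> carrier G" and gen: "carrier G = generate G T"
    and tc: "\<And>t u. t \<in> T \<Longrightarrow> u \<in> T \<Longrightarrow>
       (N #> t) \<otimes>\<^bsub>G Mod N\<^esub> (N #> u) = (N #> u) \<otimes>\<^bsub>G Mod N\<^esub> (N #> t)"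
    and x: "x \<in> carrier G" and y: "y \<in> carrier G"
  shows "x \<otimes> y \<otimes> inv x \<otimes> inv y \<in> N"
proof -
  interpret gh: group_hom G "G Mod N" "\<lambda>a. N #> a"
    by (simp add: group_hom_def group_hom_axioms_def is_group normal.factorgroup_is_group[OF N]
        normal.r_coset_hom_Mod[OF N])
  have cm: "(N #> x) \<otimes>\<^bsub>G Mod N\<^esub> (N #> y) = (N #> y) \<otimes>\<^bsub>G Mod N\<^esub> (N #> x)"
    by (rule gh.comm_all[OF T gen tc x y])
  let ?Q = "G Mod N"
  have "N #> (x \<otimes> y \<otimes> inv x \<otimes> inv y) =
    (N #> x) \<otimes>\<^bsub>?Q\<^esub> (N #> y) \<otimes>\<^bsub>?Q\<^esub> inv\<^bsub>?Q\<^esub> (N #> x) \<otimes>\<^bsub>?Q\<^esub> inv\<^bsub>?Q\<^esub> (N #> y)"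
    using x y by simp
  also have "\<dots> = (N #> y) \<otimes>\<^bsub>?Q\<^esub> (N #> x) \<otimes>\<^bsub>?Q\<^esub> inv\<^bsub>?Q\<^esub> (N #> x) \<otimes>\<^bsub>?Q\<^esub> inv\<^bsub>?Q\<^esub> (N #> y)"
    using cm by simp
  also have "\<dots> = \<one>\<^bsub>?Q\<^esub>" using gh.hom_closed[OF x] gh.hom_closed[OF y]
    by (simp add: gh.H.m_assoc del: mult_FactGroup one_FactGroup)
  also have "\<dots> = N" by simp
  finally have e: "N #> (x \<otimes> y \<otimes> inv x \<otimes> inv y) = N" .
  have "x \<otimes> y \<otimes> inv x \<otimes> inv y \<in> N #> (x \<otimes> y \<otimes> inv x \<otimes> inv y)"
    using x y N by (intro rcos_self) (auto simp: normal_def)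
  then show ?thesis using e by simp
qed

lemma (in group) comm_subgroup_mono:
  "H \<subseteq> H' \<Longrightarrow> comm_subgroup G H K \<subseteq> comm_subgroup G H' K"
  unfolding comm_subgroup_def by (rule mono_generate) blast

lemma (in group) lcs_stable:
  assumes "lcs G 1 \<subseteq> lcs G 2" and k: "k \<ge> 1"
  shows "lcs G k = lcs G 1"
proof -
  have l2: "lcs G 2 = comm_subgroup G (lcs G 1) (carrier G)"
    by (simp only: Suc_1[symmetric] lcs.simps(2))
  have "lcs G 2 \<subseteq> lcs G 1"
    unfolding l2 using comm_subgroup_mono[OF lcs_carrier[of 1], of "carrier G"] by simp
  with assms have e: "lcs G 2 = lcs G 1" by blast
  show ?thesis using k
  proof (induction k rule: nat_induct_at_least)
    case base then show ?case by simp
  next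
    case (Suc m)
    have "lcs G (Suc m) = comm_subgroup G (lcs G m) (carrier G)" by simp
    also have "\<dots> = comm_subgroup G (lcs G 1) (carrier G)" using Suc.IH by simp
    also have "\<dots> = lcs G 1" using e l2 by simp
    finally show ?case .
  qed
qed

lemma (in group) normal_closure_normal:
  assumes Y: "Y \<subseteq> carrier G"
  shows "normal_closure G Y \<lhd> G"
  unfolding normal_closure_def
proof (rule normal_generateI)
  show "{u \<otimes> y \<otimes> inv u |u y. u \<in> carrier G \<and> y \<in> Y} \<subseteq> carrier G" using Y by auto
next
  fix h g assume h: "h \<in> {u \<otimes> y \<otimes> inv u |u y. u \<in> carrier G \<and> y \<in> Y}" and g: "g \<in> carrier G"
  then obtain u y where uy: "h = u \<otimes> y \<otimes> inv u" "u \<in> carrier G" "y \<in> Y" by blast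
  have "g \<otimes> h \<otimes> inv g = (g \<otimes> u) \<otimes> y \<otimes> inv (g \<otimes> u)"
    using uy g Y by (auto simp: m_assoc inv_mult_group)
  then show "g \<otimes> h \<otimes> inv g \<in> {u \<otimes> y \<otimes> inv u |u y. u \<in> carrier G \<and> y \<in> Y}"
    using uy g by blast
qed




definition tr :: "nat \<Rightarrow> nat \<Rightarrow> nat" where
  "tr i x = (if x = i then Suc i else if x = Suc i then i else x)"

fun lp :: "kgen \<Rightarrow> nat \<Rightarrow> nat" where
  "lp (GS i) = tr i"
| "lp GA = id"
| "lp GB = id"

primrec perm_of :: "kgen word \<Rightarrow> nat \<Rightarrow> nat" where
  "perm_of [] = id"
| "perm_of (x # w) = lp (fst x) \<circ> perm_of w"

lemma perm_of_app: "perm_of (u @ v) = perm_of u \<circ> perm_of v"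
  by (induction u) (auto simp: comp_assoc)

lemma tr_tr: "tr i \<circ> tr i = id"
  by (rule ext) (simp add: tr_def)

lemma lp_lp: "lp g \<circ> lp g = id"
  by (cases g) (auto simp: tr_tr)

lemma lp_lp': "lp g (lp g x) = x"
  using lp_lp[of g] by (metis comp_apply id_apply)

lemma perm_of_flip: "perm_of (map (\<lambda>(g, b). (g, \<not> b)) w) = perm_of w"
  by (induction w) auto

lemma perm_of_rev: "perm_of w \<circ> perm_of (rev w) = id"
proof (induction w)
  case Nil then show ?case by simp
next
  case (Cons x w)
  have "perm_of (x # w) \<circ> perm_of (rev (x # w)) = lp (fst x) \<circ> (perm_of w \<circ> perm_of (rev w)) \<circ> lp (fst x)"
    by (simp add: perm_of_app comp_assoc)
  also have "\<dots> = id" by (simp only: Cons.IH comp_id lp_lp)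
  finally show ?case .
qed

lemma perm_of_winv: "perm_of (winv w) = perm_of (rev w)"
  by (simp add: winv_def rev_map perm_of_flip)

lemma perm_of_eqrel: "perm_of u = perm_of v \<Longrightarrow> perm_of (eqrel u v) = id"
  by (simp add: eqrel_def perm_of_app perm_of_winv perm_of_rev)

lemma krels_perm: "r \<in> krels n \<Longrightarrow> perm_of r = id"
proof -
  have braid: "tr i \<circ> (tr (Suc i) \<circ> tr i) = tr (Suc i) \<circ> (tr i \<circ> tr (Suc i))" for i
    by (rule ext) (simp add: tr_def)
  have far: "tr j \<circ> tr i = tr i \<circ> tr j" if "i + 2 \<le> j \<or> j + 2 \<le> i" for i j
    using that by (intro ext) (auto simp: tr_def)
  have tt: "tr i \<circ> (tr i \<circ> f) = f" for i f using tr_tr by (simp add: comp_assoc[symmetric])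
  assume "r \<in> krels n"
  then show ?thesis
    unfolding krels_def
    apply (elim UnE)
    apply (auto intro!: perm_of_eqrel simp: braid far tt tr_tr)[4]
    apply (auto simp: eqrel_def perm_of_app perm_of_winv perm_of_rev tt winv_def tr_tr)
    done
qed

lemma perm_of_pres_eq:
  assumes "pres_eq R u v" and "\<And>r. r \<in> R \<Longrightarrow> perm_of r = id"
  shows "perm_of u = perm_of v"
  using assms
proof (induction rule: pres_eq.induct)
  case (cancel u g b v)
  show ?case using lp_lp[of g] by (simp add: perm_of_app comp_assoc[symmetric])
next
  case (relator r u v)
  then show ?case by (simp add: perm_of_app)
qed auto




lemma (in group) conj_c:
  assumes u: "u \<in> carrier G" and s1: "s1 \<in> carrier G" and s2: "s2 \<in> carrier G"
    and br: "s1 \<otimes> (s2 \<otimes> s1) = s2 \<otimes> (s1 \<otimes> s2)"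
  shows "u \<otimes> (inv s2 \<otimes> s1) \<otimes> inv u \<in> lcs G 1" "u \<otimes> (inv s2 \<otimes> s1) \<otimes> inv u \<in> lcs G 2"
proof -
  have br': "s1 \<otimes> (s2 \<otimes> (s1 \<otimes> x)) = s2 \<otimes> (s1 \<otimes> (s2 \<otimes> x))" if "x \<in> carrier G" for x
    using br that s1 s2 by (metis m_assoc m_closed)
  let ?t1 = "u \<otimes> s1 \<otimes> inv u" and ?t2 = "u \<otimes> s2 \<otimes> inv u"
  have c: "?t1 \<in> carrier G" "?t2 \<in> carrier G" using u s1 s2 by auto
  have b: "?t1 \<otimes> ?t2 \<otimes> ?t1 = ?t2 \<otimes> ?t1 \<otimes> ?t2"
    using u s1 s2 by (simp add: m_assoc br')
  have e: "inv ?t2 \<otimes> ?t1 = u \<otimes> (inv s2 \<otimes> s1) \<otimes> inv u"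
    using u s1 s2 by (simp add: m_assoc inv_mult_group)
  show "u \<otimes> (inv s2 \<otimes> s1) \<otimes> inv u \<in> lcs G 1" "u \<otimes> (inv s2 \<otimes> s1) \<otimes> inv u \<in> lcs G 2"
    using braid_c_lcs[OF c b] e by auto
qed

lemma gs_in: "1 \<le> i \<Longrightarrow> i \<le> n - 1 \<Longrightarrow> GS i \<in> kgens n"
  by (auto simp: kgens_def)
lemma ga_in: "GA \<in> kgens n" by (simp add: kgens_def)
lemma gb_in: "GB \<in> kgens n" by (simp add: kgens_def)

declare mult_FactGroup[simp del] one_FactGroup[simp del]

theorem proposition5p18:
  fixes n :: nat
  assumes "n \<ge> 3"
  shows "(\<forall>i\<ge>3. Gamma (braid_K n) 2 = Gamma (braid_K n) i)
    \<and> Gamma (braid_K n) 2 =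
        normal_closure (braid_K n)
          {inv\<^bsub>braid_K n\<^esub> (sigma_K n 2) \<otimes>\<^bsub>braid_K n\<^esub> sigma_K n 1}
    \<and> Gamma (braid_K n) 2 \<noteq> {\<one>\<^bsub>braid_K n\<^esub>}
    \<and> \<not> residually_nilpotent (braid_K n)"
proof -
  note n3 = assms
  let ?R = "krels n" and ?S = "kgens n" and ?G = "braid_K n"
  have GG: "?G = presented_group ?S ?R" by (simp add: braid_K_def)
  interpret group ?G unfolding GG by (rule pg_group)
  note cons2 = pg_cons2[where S="kgens n" and R="krels n", folded GG]
  have invl: "pclass ?R [(g, True)] = inv\<^bsub>?G\<^esub> pclass ?R [(g, False)]" if "g \<in> ?S" for g
    using pg_inv_letter[OF that, of ?R] GG by simp
  have letC: "pclass ?R [(g, b)] \<in> carrier ?G" if "g \<in> ?S" for g b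
    using pg_letter_in[OF that, of ?R b] GG by simp
  define s where "s i = sigma_K n i" for i
  define A where "A = pclass ?R [(GA, False)]"
  define B where "B = pclass ?R [(GB, False)]"
  have s_def': "s i = pclass ?R [(GS i, False)]" for i by (simp add: s_def sigma_K_def)
  have sC: "s i \<in> carrier ?G" if "1 \<le> i" "i \<le> n - 1" for i
    unfolding s_def' using letC[OF gs_in[OF that]] .
  have AC: "A \<in> carrier ?G" and BC: "B \<in> carrier ?G"
    unfolding A_def B_def using letC ga_in gb_in by auto
  have braidG: "s i \<otimes>\<^bsub>?G\<^esub> (s (i+1) \<otimes>\<^bsub>?G\<^esub> s i) = s (i+1) \<otimes>\<^bsub>?G\<^esub> (s i \<otimes>\<^bsub>?G\<^esub> s (i+1))"
    if "1 \<le> i" "i \<le> n - 2" for i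
  proof -
    have "eqrel (ls i @ ls (i+1) @ ls i) (ls (i+1) @ ls i @ ls (i+1)) \<in> ?R"
      unfolding krels_def
      by (rule UnI1, rule UnI1, rule UnI1, rule UnI1, intro CollectI exI[of _ i] conjI refl) (use that in auto)
    from pg_eqrel[OF this] show ?thesis by (simp add: cons2 s_def')
  qed
  have farG: "s (i+2) \<otimes>\<^bsub>?G\<^esub> s i = s i \<otimes>\<^bsub>?G\<^esub> s (i+2)"
    if "1 \<le> i" "i + 2 \<le> n - 1" for i
  proof -
    have "eqrel (ls (i+2) @ ls i) (ls i @ ls (i+2)) \<in> ?R"
      unfolding krels_def
      by (rule UnI1, rule UnI1, rule UnI1, rule UnI2, intro CollectI exI[of _ i] exI[of _ "i+2"] conjI refl) (use that in auto)
    from pg_eqrel[OF this] show ?thesis by (simp add: cons2 s_def')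
  qed
  have aG: "A \<otimes>\<^bsub>?G\<^esub> s 2 = s 2 \<otimes>\<^bsub>?G\<^esub> A"
  proof -
    have "eqrel (la @ ls 2) (ls 2 @ la) \<in> ?R"
      unfolding krels_def
      by (rule UnI1, rule UnI1, rule UnI2, intro CollectI exI[of _ 2] conjI refl) (use n3 in auto)
    from pg_eqrel[OF this] show ?thesis by (simp add: cons2 s_def' A_def)
  qed
  have bG: "B \<otimes>\<^bsub>?G\<^esub> s 2 = s 2 \<otimes>\<^bsub>?G\<^esub> B"
  proof -
    have "eqrel (lb @ ls 2) (ls 2 @ lb) \<in> ?R"
      unfolding krels_def
      by (rule UnI1, rule UnI2, intro CollectI exI[of _ 2] conjI refl) (use n3 in auto)
    from pg_eqrel[OF this] show ?thesis by (simp add: cons2 s_def' B_def)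
  qed
  have g1: "GS (Suc 0) \<in> ?S" using gs_in[of 1 n] n3 by simp
  have R5G: "inv\<^bsub>?G\<^esub> B \<otimes>\<^bsub>?G\<^esub> (s 1 \<otimes>\<^bsub>?G\<^esub> A) =
      s 1 \<otimes>\<^bsub>?G\<^esub> (A \<otimes>\<^bsub>?G\<^esub> (s 1 \<otimes>\<^bsub>?G\<^esub> (inv\<^bsub>?G\<^esub> B \<otimes>\<^bsub>?G\<^esub> s 1)))"
  proof -
    have "eqrel (lbi @ ls 1 @ la) (ls 1 @ la @ ls 1 @ lbi @ ls 1) \<in> ?R"
      unfolding krels_def by (rule UnI2) simp
    from pg_eqrel[OF this] show ?thesis
      by (simp add: cons2 s_def' A_def B_def invl gb_in)
  qed
  have R7G: "B \<otimes>\<^bsub>?G\<^esub> (inv\<^bsub>?G\<^esub> s 1 \<otimes>\<^bsub>?G\<^esub> (B \<otimes>\<^bsub>?G\<^esub> s 1)) =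
      inv\<^bsub>?G\<^esub> s 1 \<otimes>\<^bsub>?G\<^esub> (B \<otimes>\<^bsub>?G\<^esub> (inv\<^bsub>?G\<^esub> s 1 \<otimes>\<^bsub>?G\<^esub> B))"
  proof -
    have "eqrel (lb @ lsi 1 @ lb @ ls 1) (lsi 1 @ lb @ lsi 1 @ lb) \<in> ?R"
      unfolding krels_def by (rule UnI2) simp
    from pg_eqrel[OF this] show ?thesis
      by (simp add: cons2 s_def' B_def invl g1)
  qed
  have s1C: "s 1 \<in> carrier ?G" and s2C: "s 2 \<in> carrier ?G" using sC n3 by auto
  have br12: "s 1 \<otimes>\<^bsub>?G\<^esub> (s 2 \<otimes>\<^bsub>?G\<^esub> s 1) = s 2 \<otimes>\<^bsub>?G\<^esub> (s 1 \<otimes>\<^bsub>?G\<^esub> s 2)"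
    using braidG[of 1] n3 by (simp add: numeral_2_eq_2)
  define c where "c = inv\<^bsub>?G\<^esub> (s 2) \<otimes>\<^bsub>?G\<^esub> s 1"
  have c_eq: "inv\<^bsub>?G\<^esub> (sigma_K n 2) \<otimes>\<^bsub>?G\<^esub> sigma_K n 1 = c" by (simp add: c_def s_def)
  have cC: "c \<in> carrier ?G" using s1C s2C by (simp add: c_def)
  define N where "N = normal_closure ?G {c}"
  have Nn: "N \<lhd> ?G" unfolding N_def by (rule normal_closure_normal) (use cC in auto)
  have Nsg: "subgroup N ?G" using Nn by (rule normal_imp_subgroup)
  have cN: "c \<in> N"
  proof -
    have "c = \<one>\<^bsub>?G\<^esub> \<otimes>\<^bsub>?G\<^esub> c \<otimes>\<^bsub>?G\<^esub> inv\<^bsub>?G\<^esub> \<one>\<^bsub>?G\<^esub>" using cC by simp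
    then have "c \<in> {u \<otimes>\<^bsub>?G\<^esub> y \<otimes>\<^bsub>?G\<^esub> inv\<^bsub>?G\<^esub> u |u y. u \<in> carrier ?G \<and> y \<in> {c}}" by blast
    then show ?thesis unfolding N_def normal_closure_def by (rule generate.incl)
  qed
  have N_sub: "N \<subseteq> lcs ?G 1 \<and> N \<subseteq> lcs ?G 2"
  proof -
    have X1: "{u \<otimes>\<^bsub>?G\<^esub> y \<otimes>\<^bsub>?G\<^esub> inv\<^bsub>?G\<^esub> u |u y. u \<in> carrier ?G \<and> y \<in> {c}} \<subseteq> lcs ?G 1"
      using conj_c(1)[OF _ s1C s2C br12] by (auto simp: c_def)
    have X2: "{u \<otimes>\<^bsub>?G\<^esub> y \<otimes>\<^bsub>?G\<^esub> inv\<^bsub>?G\<^esub> u |u y. u \<in> carrier ?G \<and> y \<in> {c}} \<subseteq> lcs ?G 2"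
      using conj_c(2)[OF _ s1C s2C br12] by (auto simp: c_def)
    show ?thesis unfolding N_def normal_closure_def
      using generate_subgroup_incl[OF X1 lcs_subgroup] generate_subgroup_incl[OF X2 lcs_subgroup] by blast
  qed
  let ?T = "(\<lambda>g. pclass ?R [(g, False)]) ` ?S"
  have gen: "carrier ?G = generate ?G ?T" using pg_generate[of ?S ?R] GG by simp
  have T: "?T \<subseteq> carrier ?G" using letC by auto
  interpret Q: group "?G Mod N" by (rule normal.factorgroup_is_group[OF Nn])
  interpret gh: group_hom ?G "?G Mod N" "\<lambda>a. N #>\<^bsub>?G\<^esub> a"
    by (simp add: group_hom_def group_hom_axioms_def is_group Q.is_group normal.r_coset_hom_Mod[OF Nn])
  have pc: "N #>\<^bsub>?G\<^esub> c = \<one>\<^bsub>?G Mod N\<^esub>" using coset_join2[OF cC Nsg cN] by (simp add: one_FactGroup)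
  have ps12: "N #>\<^bsub>?G\<^esub> s 2 = N #>\<^bsub>?G\<^esub> s 1"
  proof -
    have "s 1 = s 2 \<otimes>\<^bsub>?G\<^esub> c" using s1C s2C by (simp add: c_def)
    then have "N #>\<^bsub>?G\<^esub> s 1 = (N #>\<^bsub>?G\<^esub> s 2) \<otimes>\<^bsub>?G Mod N\<^esub> (N #>\<^bsub>?G\<^esub> c)" using s2C cC by simp
    then show ?thesis using pc gh.hom_closed[OF s2C] by simp
  qed
  have sall: "N #>\<^bsub>?G\<^esub> s i = N #>\<^bsub>?G\<^esub> s 1" if "1 \<le> i" "i \<le> n - 1" for i
  proof (rule Q.all_sigma_eq[of n "\<lambda>i. N #>\<^bsub>?G\<^esub> s i", OF n3 _ _ _ ps12[symmetric] that])
    show "N #>\<^bsub>?G\<^esub> s i \<in> carrier (?G Mod N)" if "1 \<le> i" "i \<le> n - 1" for i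
      using gh.hom_closed[OF sC[OF that]] .
    show "(N #>\<^bsub>?G\<^esub> s i) \<otimes>\<^bsub>?G Mod N\<^esub> ((N #>\<^bsub>?G\<^esub> s (i + 1)) \<otimes>\<^bsub>?G Mod N\<^esub> (N #>\<^bsub>?G\<^esub> s i)) =
          (N #>\<^bsub>?G\<^esub> s (i + 1)) \<otimes>\<^bsub>?G Mod N\<^esub> ((N #>\<^bsub>?G\<^esub> s i) \<otimes>\<^bsub>?G Mod N\<^esub> (N #>\<^bsub>?G\<^esub> s (i + 1)))"
      if "1 \<le> i" "i \<le> n - 2" for i
    proof -
      have c1: "s i \<in> carrier ?G" "s (i+1) \<in> carrier ?G" using sC that by auto
      show ?thesis using arg_cong[where f="\<lambda>a. N #>\<^bsub>?G\<^esub> a", OF braidG[OF that]] c1 by simp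
    qed
    show "(N #>\<^bsub>?G\<^esub> s (i + 2)) \<otimes>\<^bsub>?G Mod N\<^esub> (N #>\<^bsub>?G\<^esub> s i) = (N #>\<^bsub>?G\<^esub> s i) \<otimes>\<^bsub>?G Mod N\<^esub> (N #>\<^bsub>?G\<^esub> s (i + 2))"
      if "1 \<le> i" "i + 2 \<le> n - 1" for i
    proof -
      have c1: "s i \<in> carrier ?G" "s (i+2) \<in> carrier ?G" using sC that by auto
      show ?thesis using arg_cong[where f="\<lambda>a. N #>\<^bsub>?G\<^esub> a", OF farG[OF that]] c1 by simp
    qed
  qed
  have pA: "(N #>\<^bsub>?G\<^esub> A) \<otimes>\<^bsub>?G Mod N\<^esub> (N #>\<^bsub>?G\<^esub> s 1) = (N #>\<^bsub>?G\<^esub> s 1) \<otimes>\<^bsub>?G Mod N\<^esub> (N #>\<^bsub>?G\<^esub> A)"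
    using arg_cong[where f="\<lambda>a. N #>\<^bsub>?G\<^esub> a", OF aG] AC s2C ps12 by simp
  have pB: "(N #>\<^bsub>?G\<^esub> B) \<otimes>\<^bsub>?G Mod N\<^esub> (N #>\<^bsub>?G\<^esub> s 1) = (N #>\<^bsub>?G\<^esub> s 1) \<otimes>\<^bsub>?G Mod N\<^esub> (N #>\<^bsub>?G\<^esub> B)"
    using arg_cong[where f="\<lambda>a. N #>\<^bsub>?G\<^esub> a", OF bG] BC s2C ps12 by simp
  have pAB: "(N #>\<^bsub>?G\<^esub> A) \<otimes>\<^bsub>?G Mod N\<^esub> (N #>\<^bsub>?G\<^esub> B) = (N #>\<^bsub>?G\<^esub> B) \<otimes>\<^bsub>?G Mod N\<^esub> (N #>\<^bsub>?G\<^esub> A)"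
  proof (rule Q.ab_comm[OF gh.hom_closed[OF s1C] gh.hom_closed[OF AC] gh.hom_closed[OF BC] pA pB])
    show "inv\<^bsub>?G Mod N\<^esub> (N #>\<^bsub>?G\<^esub> B) \<otimes>\<^bsub>?G Mod N\<^esub> ((N #>\<^bsub>?G\<^esub> s 1) \<otimes>\<^bsub>?G Mod N\<^esub> (N #>\<^bsub>?G\<^esub> A)) =
      (N #>\<^bsub>?G\<^esub> s 1) \<otimes>\<^bsub>?G Mod N\<^esub> ((N #>\<^bsub>?G\<^esub> A) \<otimes>\<^bsub>?G Mod N\<^esub> ((N #>\<^bsub>?G\<^esub> s 1) \<otimes>\<^bsub>?G Mod N\<^esub>
        (inv\<^bsub>?G Mod N\<^esub> (N #>\<^bsub>?G\<^esub> B) \<otimes>\<^bsub>?G Mod N\<^esub> (N #>\<^bsub>?G\<^esub> s 1))))"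
      using arg_cong[where f="\<lambda>a. N #>\<^bsub>?G\<^esub> a", OF R5G] AC BC s1C by simp
    show "(N #>\<^bsub>?G\<^esub> B) \<otimes>\<^bsub>?G Mod N\<^esub> (inv\<^bsub>?G Mod N\<^esub> (N #>\<^bsub>?G\<^esub> s 1) \<otimes>\<^bsub>?G Mod N\<^esub> ((N #>\<^bsub>?G\<^esub> B) \<otimes>\<^bsub>?G Mod N\<^esub> (N #>\<^bsub>?G\<^esub> s 1))) =
      inv\<^bsub>?G Mod N\<^esub> (N #>\<^bsub>?G\<^esub> s 1) \<otimes>\<^bsub>?G Mod N\<^esub> ((N #>\<^bsub>?G\<^esub> B) \<otimes>\<^bsub>?G Mod N\<^esub> (inv\<^bsub>?G Mod N\<^esub> (N #>\<^bsub>?G\<^esub> s 1) \<otimes>\<^bsub>?G Mod N\<^esub> (N #>\<^bsub>?G\<^esub> B)))"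
      using arg_cong[where f="\<lambda>a. N #>\<^bsub>?G\<^esub> a", OF R7G] AC BC s1C by simp
  qed
  have pT: "N #>\<^bsub>?G\<^esub> t \<in> {N #>\<^bsub>?G\<^esub> A, N #>\<^bsub>?G\<^esub> B, N #>\<^bsub>?G\<^esub> s 1}" if "t \<in> ?T" for t
  proof -
    obtain g where g: "g \<in> ?S" "t = pclass ?R [(g, False)]" using \<open>t \<in> ?T\<close> by blast
    show ?thesis
    proof (cases g)
      case GA then show ?thesis using g by (simp add: A_def)
    next
      case GB then show ?thesis using g by (simp add: B_def)
    next
      case (GS i)
      then have "1 \<le> i" "i \<le> n - 1" using g(1) by (auto simp: kgens_def)
      then show ?thesis using sall[of i] g GS by (simp add: s_def')
    qed
  qed
  have tc: "(N #>\<^bsub>?G\<^esub> t) \<otimes>\<^bsub>?G Mod N\<^esub> (N #>\<^bsub>?G\<^esub> u) = (N #>\<^bsub>?G\<^esub> u) \<otimes>\<^bsub>?G Mod N\<^esub> (N #>\<^bsub>?G\<^esub> t)"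
    if "t \<in> ?T" "u \<in> ?T" for t u
    using pT[OF that(1)] pT[OF that(2)] pA pB pAB by auto
  have l1N: "lcs ?G 1 \<subseteq> N"
  proof -
    have l1: "lcs ?G 1 = generate ?G {h \<otimes>\<^bsub>?G\<^esub> k \<otimes>\<^bsub>?G\<^esub> inv\<^bsub>?G\<^esub> h \<otimes>\<^bsub>?G\<^esub> inv\<^bsub>?G\<^esub> k | h k. h \<in> carrier ?G \<and> k \<in> carrier ?G}"
      by (simp add: comm_subgroup_def)
    have "{h \<otimes>\<^bsub>?G\<^esub> k \<otimes>\<^bsub>?G\<^esub> inv\<^bsub>?G\<^esub> h \<otimes>\<^bsub>?G\<^esub> inv\<^bsub>?G\<^esub> k | h k. h \<in> carrier ?G \<and> k \<in> carrier ?G} \<subseteq> N"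
      using comm_mod[OF Nn T gen tc] by blast
    then show ?thesis unfolding l1 by (rule generate_subgroup_incl[OF _ Nsg])
  qed
  have e1: "lcs ?G 1 = N" using l1N N_sub by blast
  have stab: "lcs ?G k = lcs ?G 1" if "k \<ge> 1" for k
    by (rule lcs_stable[OF _ that]) (use e1 N_sub in blast)
  have G2: "Gamma ?G 2 = lcs ?G 1" by (simp add: Gamma_def)
  have c_ne: "c \<noteq> \<one>\<^bsub>?G\<^esub>"
  proof
    assume "c = \<one>\<^bsub>?G\<^esub>"
    moreover have "c = pclass ?R [(GS 2, True), (GS 1, False)]"
      using gs_in[of 2 n] n3 by (simp add: c_def s_def' cons2 invl)
    moreover have "\<one>\<^bsub>?G\<^esub> = pclass ?R []" using pg_one[of ?S ?R] GG by simp
    ultimately have "pres_eq ?R [(GS 2, True), (GS 1, False)] []" by (simp add: pclass_eq_iff)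
    then have "perm_of [(GS 2, True), (GS 1, False)] = perm_of []"
      by (rule perm_of_pres_eq) (rule krels_perm)
    then have "perm_of [(GS 2, True), (GS 1, False)] 1 = perm_of [] 1" by simp
    then show False by (simp add: tr_def)
  qed
  show ?thesis
  proof (intro conjI allI impI)
    fix i :: nat assume "i \<ge> 3"
    then show "Gamma ?G 2 = Gamma ?G i" using stab[of "i - 1"] G2 by (simp add: Gamma_def)
  next
    show "Gamma ?G 2 = normal_closure ?G {inv\<^bsub>?G\<^esub> (sigma_K n 2) \<otimes>\<^bsub>?G\<^esub> sigma_K n 1}"
      using G2 e1 c_eq N_def by simp
  next
    show "Gamma ?G 2 \<noteq> {\<one>\<^bsub>?G\<^esub>}" using G2 e1 cN c_ne by auto
  next
    have "c \<in> Gamma ?G i" if "i \<in> {1..}" for i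
    proof (cases "i = 1")
      case True then show ?thesis using cC by (simp add: Gamma_def)
    next
      case False
      then have "Gamma ?G i = lcs ?G 1" using that stab[of "i - 1"] by (simp add: Gamma_def)
      then show ?thesis using e1 cN by simp
    qed
    then have "c \<in> (\<Inter>i\<in>{1..}. Gamma ?G i)" by blast
    then show "\<not> residually_nilpotent ?G" unfolding residually_nilpotent_def using c_ne by auto
  qed
qed


end
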